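(* Let $V\in(\mathbb{R}\cup\{-\infty\})^{n\times p}$ have no row and no column identically $-\infty$, and suppose each column of $V$ has at least two finite entries. Consider the game $\Gamma$ defined below. The following are equivalent: (1) there are disjoint dominions for the two players in $\Gamma$; (2) there exist nonempty subsets $I,J\subset[n]$ with $I\cup J=[n]$, $I\cap J=\emptyset$, such that some columns of $V$ have support included in $I$, and the other columns of $V$ have at least two finite entries in $J$; (3) there exists $K\subset[p]$ with $K\neq\emptyset$, $K\neq[p]$, such that, denoting by $I_K$ the union of the supports of the columns of $V$ indexed by $K$, every column not in $K$ has at least two finite entries outside $I_K$. Moreover, in case (3), $I_K$ and $[n]\setminus I_K$ are disjoint dominions of players Min and Max respectively.
   Context: Support of a column: set of indices of its finite entries. Let $E=\{(i,k):V_{ik}\neq-\infty\}$. The game $\Gamma$ is a repeated two-player game with states $[n]$: at state $i$, player Min chooses a column $k$ with $(i,k)\in E$, then player Max chooses $j\in[n]$ with $j\neq i$ and $(j,k)\in E$, and the game moves to state $j$ (Min pays $-V_{ik}$ and then $V_{jk}$ to Max; payments are irrelevant here). A dominion of a player is a nonempty set $I\subset[n]$ such that this player has a policy ensuring that, from any initial state in $I$ and whatever the other player does, all states visited (at Min's turns) remain in $I$. *)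

theory Defs
  imports "HOL-Library.Extended_Real"
begin

text \<open>Matrix V with entries in R \<union> {-\<infinity>} (ereal, with +\<infinity> excluded by assumption),
  rows indexed by {..<n}, columns by {..<p}.\<close>

definition supp :: "(nat \<Rightarrow> nat \<Rightarrow> ereal) \<Rightarrow> nat \<Rightarrow> nat \<Rightarrow> nat set" where
  "supp V n k = {i. i < n \<and> V i k \<noteq> -\<infinity>}"

definition inE :: "(nat \<Rightarrow> nat \<Rightarrow> ereal) \<Rightarrow> nat \<Rightarrow> nat \<Rightarrow> nat \<Rightarrow> nat \<Rightarrow> bool" where
  "inE V n p i k \<longleftrightarrow> i < n \<and> k < p \<and> V i k \<noteq> -\<infinity>"

text \<open>Plays: states x 0, x 1, ... and Min's columns c 0, c 1, ...  At turn s Min chooses c s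
  with (x s, c s) in E, then Max chooses x (s+1) \<noteq> x s with (x (s+1), c s) in E.  A Min policy maps (states x0..xs, columns c0..c(s-1))
  to a column; a Max policy maps (states x0..xs, columns c0..cs) to a state.
  Dominion: from every initial state in I, against every behaviour of the opponent,
  every finite play prefix consistent with the policy is legal for the policy owner and all
  states visited stay in I.\<close>

definition min_dominion :: "(nat \<Rightarrow> nat \<Rightarrow> ereal) \<Rightarrow> nat \<Rightarrow> nat \<Rightarrow> nat set \<Rightarrow> bool" where
  "min_dominion V n p I \<longleftrightarrow> I \<noteq> {} \<and> I \<subseteq> {..<n} \<and>
    (\<exists>\<sigma> :: nat list \<Rightarrow> nat list \<Rightarrow> nat. \<forall>T (x :: nat \<Rightarrow> nat) (c :: nat \<Rightarrow> nat).
       x 0 \<in> I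
       \<and> (\<forall>s\<le>T. c s = \<sigma> (map x [0..<Suc s]) (map c [0..<s]))
       \<and> (\<forall>s<T. x (Suc s) \<noteq> x s \<and> inE V n p (x (Suc s)) (c s))
       \<longrightarrow> (\<forall>s\<le>T. x s \<in> I \<and> inE V n p (x s) (c s)))"

definition max_dominion :: "(nat \<Rightarrow> nat \<Rightarrow> ereal) \<Rightarrow> nat \<Rightarrow> nat \<Rightarrow> nat set \<Rightarrow> bool" where
  "max_dominion V n p I \<longleftrightarrow> I \<noteq> {} \<and> I \<subseteq> {..<n} \<and>
    (\<exists>\<tau> :: nat list \<Rightarrow> nat list \<Rightarrow> nat. \<forall>T (x :: nat \<Rightarrow> nat) (c :: nat \<Rightarrow> nat).
       x 0 \<in> I
       \<and> (\<forall>s<T. inE V n p (x s) (c s) \<and> x (Suc s) = \<tau> (map x [0..<Suc s]) (map c [0..<Suc s]))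
       \<longrightarrow> (\<forall>s<T. x (Suc s) \<noteq> x s \<and> inE V n p (x (Suc s)) (c s) \<and> x (Suc s) \<in> I))"

end

theory Submission
  imports Defs
begin

lemma two_ex: assumes "2 \<le> card (A::nat set)" shows "\<exists>j\<in>A. j \<noteq> a"
proof (rule ccontr)
  assume "\<not> ?thesis"
  hence "A \<subseteq> {a}" by auto
  hence "card A \<le> 1" using card_mono[of "{a}" A] by simp
  thus False using assms by simp
qed

lemma two_card: assumes "finite B" "a \<in> B" "b \<in> B" "a \<noteq> b" shows "2 \<le> card B"
proof -
  have "card {a,b} \<le> card B" using assms by (intro card_mono) auto
  thus ?thesis using assms by simp
qed

lemma part3:
  assumes two: "\<forall>k<p. 2 \<le> card (supp V n k)"
    and K: "K \<subseteq> {..<p}" "K \<noteq> {}" "K \<noteq> {..<p}"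
    and hK: "\<forall>k\<in>{..<p} - K. 2 \<le> card (supp V n k - (\<Union>k'\<in>K. supp V n k'))"
  shows "min_dominion V n p (\<Union>k\<in>K. supp V n k) \<and> max_dominion V n p ({..<n} - (\<Union>k\<in>K. supp V n k))"
proof
  define U where "U = (\<Union>k\<in>K. supp V n k)"
  have Usub: "U \<subseteq> {..<n}" by (auto simp: U_def supp_def)
  have Une: "U \<noteq> {}"
  proof -
    obtain k where k: "k \<in> K" using K by auto
    hence "2 \<le> card (supp V n k)" using two K by auto
    hence "supp V n k \<noteq> {}" by auto
    thus ?thesis using k by (auto simp: U_def)
  qed
  define \<sigma> where "\<sigma> = (\<lambda>xs (cs::nat list). SOME k. k \<in> K \<and> last xs \<in> supp V n k)"
  have h\<sigma>: "\<sigma> xs cs \<in> K \<and> last xs \<in> supp V n (\<sigma> xs cs)" if "last xs \<in> U" for xs cs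
    unfolding \<sigma>_def by (rule someI_ex) (use that in \<open>auto simp: U_def\<close>)
  show "min_dominion V n p U"
    unfolding min_dominion_def
  proof (rule conjI[OF Une conjI[OF Usub]], rule exI[of _ \<sigma>], (rule allI)+, rule impI)
    fix T x c assume H: "x 0 \<in> U \<and> (\<forall>s\<le>T. c s = \<sigma> (map x [0..<Suc s]) (map c [0..<s]))
       \<and> (\<forall>s<T. x (Suc s) \<noteq> x s \<and> inE V n p (x (Suc s)) (c s))"
    have cs: "\<And>s. s \<le> T \<Longrightarrow> c s = \<sigma> (map x [0..<Suc s]) (map c [0..<s])" using H by blast
    have mv: "\<And>s. s < T \<Longrightarrow> inE V n p (x (Suc s)) (c s)" using H by blast
    have cK: "c s \<in> K \<and> x s \<in> supp V n (c s)" if "s \<le> T" "x s \<in> U" for s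
      using h\<sigma>[of "map x [0..<Suc s]" "map c [0..<s]"] cs[OF that(1)] that(2) by simp
    have xs: "s \<le> T \<Longrightarrow> x s \<in> U" for s
    proof (induction s)
      case 0 from H show ?case by simp
    next
      case (Suc s)
      then have "x s \<in> U" by simp
      hence "c s \<in> K" using cK Suc.prems by simp
      moreover have "inE V n p (x (Suc s)) (c s)" using mv Suc.prems by simp
      ultimately show ?case by (auto simp: U_def inE_def supp_def)
    qed
    show "\<forall>s\<le>T. x s \<in> U \<and> inE V n p (x s) (c s)"
    proof (intro allI impI)
      fix s assume s: "s \<le> T"
      with xs have "x s \<in> U" by simp
      with cK s have "c s \<in> K \<and> x s \<in> supp V n (c s)" by simp
      thus "x s \<in> U \<and> inE V n p (x s) (c s)" using K \<open>x s \<in> U\<close> by (auto simp: inE_def supp_def)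
    qed
  qed
  define J where "J = {..<n} - U"
  have Jne: "J \<noteq> {}"
  proof -
    obtain k where k: "k < p" "k \<notin> K" using K by auto
    hence "2 \<le> card (supp V n k - U)" using hK by (auto simp: U_def)
    hence "supp V n k - U \<noteq> {}" by (cases "supp V n k - U = {}") auto
    thus ?thesis by (auto simp: J_def supp_def)
  qed
  define \<tau> where "\<tau> = (\<lambda>xs cs. SOME j. j \<in> J \<and> j \<noteq> last xs \<and> j \<in> supp V n (last cs))"
  have h\<tau>: "\<tau> xs cs \<in> J \<and> \<tau> xs cs \<noteq> i \<and> inE V n p (\<tau> xs cs) k"
    if "last xs = i" "last cs = k" "i \<in> J" "inE V n p i k" for xs cs i k
  proof -
    have "k \<notin> K" using that by (auto simp: J_def U_def inE_def supp_def)
    hence "2 \<le> card (supp V n k - U)" using hK that by (auto simp: U_def inE_def)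
    then obtain j where "j \<in> supp V n k - U" "j \<noteq> i" using two_ex by blast
    hence "\<exists>j. j \<in> J \<and> j \<noteq> last xs \<and> j \<in> supp V n (last cs)" using that
      by (auto simp: J_def supp_def)
    hence "\<tau> xs cs \<in> J \<and> \<tau> xs cs \<noteq> last xs \<and> \<tau> xs cs \<in> supp V n (last cs)"
      unfolding \<tau>_def by (rule someI_ex)
    thus ?thesis using that by (auto simp: supp_def inE_def)
  qed
  have Jsub: "J \<subseteq> {..<n}" by (auto simp: J_def)
  show "max_dominion V n p ({..<n} - U)"
    unfolding max_dominion_def J_def[symmetric]
  proof (rule conjI[OF Jne conjI[OF Jsub]], rule exI[of _ \<tau>], (rule allI)+, rule impI)
    fix T x c assume H: "x 0 \<in> J \<and> (\<forall>s<T. inE V n p (x s) (c s) \<and>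
          x (Suc s) = \<tau> (map x [0..<Suc s]) (map c [0..<Suc s]))"
    have mv: "\<And>s. s < T \<Longrightarrow> inE V n p (x s) (c s) \<and>
          x (Suc s) = \<tau> (map x [0..<Suc s]) (map c [0..<Suc s])" using H by blast
    have step: "x (Suc s) \<in> J \<and> x (Suc s) \<noteq> x s \<and> inE V n p (x (Suc s)) (c s)"
      if "s < T" "x s \<in> J" for s
      using h\<tau>[of "map x [0..<Suc s]" "x s" "map c [0..<Suc s]" "c s"] mv[OF that(1)] that(2) by simp
    have xs: "s \<le> T \<Longrightarrow> x s \<in> J" for s
    proof (induction s)
      case 0 from H show ?case by simp
    next
      case (Suc s) thus ?case using step by simp
    qed
    show "\<forall>s<T. x (Suc s) \<noteq> x s \<and> inE V n p (x (Suc s)) (c s) \<and> x (Suc s) \<in> J"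
      using step xs by simp
  qed
qed


theorem propositionA2:
  fixes V :: "nat \<Rightarrow> nat \<Rightarrow> ereal" and n p :: nat
  assumes no_pinf: "\<forall>i<n. \<forall>k<p. V i k \<noteq> \<infinity>"
    and rows: "\<forall>i<n. \<exists>k<p. V i k \<noteq> -\<infinity>"
    and cols: "\<forall>k<p. \<exists>i<n. V i k \<noteq> -\<infinity>"
    and two: "\<forall>k<p. 2 \<le> card (supp V n k)"
  shows "((\<exists>I J. min_dominion V n p I \<and> max_dominion V n p J \<and> I \<inter> J = {})
          \<longleftrightarrow> (\<exists>I J. I \<noteq> {} \<and> J \<noteq> {} \<and> I \<union> J = {..<n} \<and> I \<inter> J = {} \<and>
                (\<exists>K\<subseteq>{..<p}. K \<noteq> {} \<and> (\<forall>k\<in>K. supp V n k \<subseteq> I) \<and>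
                   (\<forall>k\<in>{..<p} - K. 2 \<le> card (supp V n k \<inter> J)))))
       \<and> ((\<exists>I J. I \<noteq> {} \<and> J \<noteq> {} \<and> I \<union> J = {..<n} \<and> I \<inter> J = {} \<and>
                (\<exists>K\<subseteq>{..<p}. K \<noteq> {} \<and> (\<forall>k\<in>K. supp V n k \<subseteq> I) \<and>
                   (\<forall>k\<in>{..<p} - K. 2 \<le> card (supp V n k \<inter> J))))
          \<longleftrightarrow> (\<exists>K\<subseteq>{..<p}. K \<noteq> {} \<and> K \<noteq> {..<p} \<and>
                (\<forall>k\<in>{..<p} - K. 2 \<le> card (supp V n k - (\<Union>k'\<in>K. supp V n k')))))
       \<and> (\<forall>K\<subseteq>{..<p}. K \<noteq> {} \<and> K \<noteq> {..<p} \<and>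
                (\<forall>k\<in>{..<p} - K. 2 \<le> card (supp V n k - (\<Union>k'\<in>K. supp V n k')))
            \<longrightarrow> min_dominion V n p (\<Union>k\<in>K. supp V n k)
                \<and> max_dominion V n p ({..<n} - (\<Union>k\<in>K. supp V n k)))"
proof -
  have fin: "\<And>k. finite (supp V n k)" by (rule finite_subset[of _ "{..<n}"]) (auto simp: supp_def)
  let ?P2 = "\<exists>I J. I \<noteq> {} \<and> J \<noteq> {} \<and> I \<union> J = {..<n} \<and> I \<inter> J = {} \<and>
                (\<exists>K\<subseteq>{..<p}. K \<noteq> {} \<and> (\<forall>k\<in>K. supp V n k \<subseteq> I) \<and>
                   (\<forall>k\<in>{..<p} - K. 2 \<le> card (supp V n k \<inter> J)))"
  let ?P3 = "\<exists>K\<subseteq>{..<p}. K \<noteq> {} \<and> K \<noteq> {..<p} \<and>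
                (\<forall>k\<in>{..<p} - K. 2 \<le> card (supp V n k - (\<Union>k'\<in>K. supp V n k')))"
  have p3: "\<forall>K\<subseteq>{..<p}. K \<noteq> {} \<and> K \<noteq> {..<p} \<and>
                (\<forall>k\<in>{..<p} - K. 2 \<le> card (supp V n k - (\<Union>k'\<in>K. supp V n k')))
            \<longrightarrow> min_dominion V n p (\<Union>k\<in>K. supp V n k)
                \<and> max_dominion V n p ({..<n} - (\<Union>k\<in>K. supp V n k))"
    using part3[OF two] by blast
  have d23: "?P3" if "?P2"
  proof -
    from that obtain I J K where IJ: "I \<noteq> {}" "J \<noteq> {}" "I \<union> J = {..<n}" "I \<inter> J = {}"
      and K: "K \<subseteq> {..<p}" "K \<noteq> {}" "\<forall>k\<in>K. supp V n k \<subseteq> I"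
      "\<forall>k\<in>{..<p} - K. 2 \<le> card (supp V n k \<inter> J)" by blast
    have "K \<noteq> {..<p}"
    proof
      assume Kp: "K = {..<p}"
      obtain j where j: "j \<in> J" using IJ by auto
      hence "j < n" using IJ by auto
      then obtain k where "k < p" "V j k \<noteq> -\<infinity>" using rows by auto
      hence "j \<in> supp V n k" "supp V n k \<subseteq> I" using K Kp \<open>j < n\<close> by (auto simp: supp_def)
      thus False using j IJ by auto
    qed
    moreover have "2 \<le> card (supp V n k - (\<Union>k'\<in>K. supp V n k'))" if "k \<in> {..<p} - K" for k
    proof -
      have "supp V n k \<inter> J \<subseteq> supp V n k - (\<Union>k'\<in>K. supp V n k')" using K IJ by blast
      hence "card (supp V n k \<inter> J) \<le> card (supp V n k - (\<Union>k'\<in>K. supp V n k'))"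
        using fin by (intro card_mono) auto
      moreover have "2 \<le> card (supp V n k \<inter> J)" using K(4) that by blast
      ultimately show ?thesis by linarith
    qed
    ultimately show ?thesis using K by blast
  qed
  have d32: "?P2" if "?P3"
  proof -
    from that obtain K where K: "K \<subseteq> {..<p}" "K \<noteq> {}" "K \<noteq> {..<p}"
      "\<forall>k\<in>{..<p} - K. 2 \<le> card (supp V n k - (\<Union>k'\<in>K. supp V n k'))" by blast
    define U where "U = (\<Union>k'\<in>K. supp V n k')"
    have Usub: "U \<subseteq> {..<n}" by (auto simp: U_def supp_def)
    have "U \<noteq> {}"
    proof -
      obtain k where k: "k \<in> K" using K by auto
      hence "2 \<le> card (supp V n k)" using two K by auto
      hence "supp V n k \<noteq> {}" by auto
      thus ?thesis using k by (auto simp: U_def)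
    qed
    moreover have "{..<n} - U \<noteq> {}"
    proof -
      obtain k where k: "k < p" "k \<notin> K" using K by auto
      hence "2 \<le> card (supp V n k - U)" using K by (auto simp: U_def)
      hence "supp V n k - U \<noteq> {}" by (cases "supp V n k - U = {}") auto
      thus ?thesis by (auto simp: supp_def)
    qed
    moreover have "\<forall>k\<in>{..<p} - K. 2 \<le> card (supp V n k \<inter> ({..<n} - U))"
    proof
      fix k assume "k \<in> {..<p} - K"
      moreover have "supp V n k \<inter> ({..<n} - U) = supp V n k - U" by (auto simp: supp_def)
      ultimately show "2 \<le> card (supp V n k \<inter> ({..<n} - U))" using K by (simp add: U_def)
    qed
    moreover have "\<forall>k\<in>K. supp V n k \<subseteq> U" by (auto simp: U_def)
    ultimately show ?thesis using K Usub
      by (intro exI[of _ U] exI[of _ "{..<n} - U"]) blast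
  qed
  have d21: "\<exists>I J. min_dominion V n p I \<and> max_dominion V n p J \<and> I \<inter> J = {}" if "?P2"
  proof -
    from d23[OF that] obtain K where K: "K \<subseteq> {..<p}" "K \<noteq> {}" "K \<noteq> {..<p}"
      "\<forall>k\<in>{..<p} - K. 2 \<le> card (supp V n k - (\<Union>k'\<in>K. supp V n k'))" by blast
    with p3 show ?thesis by blast
  qed
  have d12: "?P2" if "\<exists>I J. min_dominion V n p I \<and> max_dominion V n p J \<and> I \<inter> J = {}"
  proof -
    from that obtain I J where mI: "min_dominion V n p I" and mJ: "max_dominion V n p J"
      and dis: "I \<inter> J = {}" by blast
    from mI obtain \<sigma> where I: "I \<noteq> {}" "I \<subseteq> {..<n}" and h\<sigma>: "\<forall>T (x :: nat \<Rightarrow> nat) (c :: nat \<Rightarrow> nat).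
       x 0 \<in> I
       \<and> (\<forall>s\<le>T. c s = \<sigma> (map x [0..<Suc s]) (map c [0..<s]))
       \<and> (\<forall>s<T. x (Suc s) \<noteq> x s \<and> inE V n p (x (Suc s)) (c s))
       \<longrightarrow> (\<forall>s\<le>T. x s \<in> I \<and> inE V n p (x s) (c s))"
      unfolding min_dominion_def by blast
    from mJ obtain \<tau> where J: "J \<noteq> {}" "J \<subseteq> {..<n}" and h\<tau>: "\<forall>T (x :: nat \<Rightarrow> nat) (c :: nat \<Rightarrow> nat).
       x 0 \<in> J
       \<and> (\<forall>s<T. inE V n p (x s) (c s) \<and> x (Suc s) = \<tau> (map x [0..<Suc s]) (map c [0..<Suc s]))
       \<longrightarrow> (\<forall>s<T. x (Suc s) \<noteq> x s \<and> inE V n p (x (Suc s)) (c s) \<and> x (Suc s) \<in> J)"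
      unfolding max_dominion_def by blast
    obtain i where i: "i \<in> I" using I by auto
    define k where "k = \<sigma> [i] []"
    have "inE V n p i k"
      using h\<sigma>[rule_format, of "\<lambda>_. i" 0 "\<lambda>_. k"] i by (simp add: k_def)
    hence ik: "i \<in> supp V n k" "k < p" by (auto simp: inE_def supp_def)
    have kJ: "supp V n k \<inter> J = {}"
    proof (rule ccontr)
      assume "supp V n k \<inter> J \<noteq> {}"
      then obtain j where j: "j \<in> supp V n k" "j \<in> J" by auto
      hence ji: "j \<noteq> i" using i dis by auto
      define x where "x = (\<lambda>s::nat. if s = 0 then i else j)"
      define c where "c = (\<lambda>s::nat. if s = 0 then k else \<sigma> [i, j] [k])"
      have "\<forall>s\<le>1. c s = \<sigma> (map x [0..<Suc s]) (map c [0..<s])"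
      proof (intro allI impI)
        fix s :: nat assume "s \<le> 1"
        hence "s = 0 \<or> s = 1" by auto
        thus "c s = \<sigma> (map x [0..<Suc s]) (map c [0..<s])"
          by (auto simp: x_def c_def k_def)
      qed
      moreover have "\<forall>s<1. x (Suc s) \<noteq> x s \<and> inE V n p (x (Suc s)) (c s)"
        using ji j ik by (auto simp: x_def c_def inE_def supp_def)
      moreover have "x 0 \<in> I" using i by (simp add: x_def)
      ultimately have "\<forall>s\<le>1. x s \<in> I \<and> inE V n p (x s) (c s)" using h\<sigma> by blast
      hence "x 1 \<in> I" by blast
      thus False using j dis by (auto simp: x_def)
    qed
    define K where "K = {k. k < p \<and> supp V n k \<inter> J = {}}"
    have K1: "K \<noteq> {}" using kJ ik by (auto simp: K_def)
    have I1: "{..<n} - J \<noteq> {}" using i I dis by auto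
    have K2: "\<forall>k\<in>K. supp V n k \<subseteq> {..<n} - J" by (auto simp: K_def supp_def)
    have K3: "\<forall>k\<in>{..<p} - K. 2 \<le> card (supp V n k \<inter> J)"
    proof
      fix k assume k: "k \<in> {..<p} - K"
      then obtain j where j: "j \<in> supp V n k" "j \<in> J" by (auto simp: K_def)
      define x where "x = (\<lambda>s::nat. if s = 0 then j else \<tau> [j] [k])"
      have "\<forall>s<1. inE V n p (x s) ((\<lambda>_. k) s) \<and> x (Suc s) = \<tau> (map x [0..<Suc s]) (map (\<lambda>_. k) [0..<Suc s])"
        using j k by (auto simp: x_def inE_def supp_def)
      hence "x 1 \<noteq> x 0 \<and> inE V n p (x 1) k \<and> x 1 \<in> J"
        using h\<tau>[rule_format, of x 1 "\<lambda>_. k"] j by (auto simp: x_def)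
      hence "x 1 \<in> supp V n k \<inter> J" "x 1 \<noteq> j" by (auto simp: inE_def supp_def x_def)
      thus "2 \<le> card (supp V n k \<inter> J)" using j fin two_card[of "supp V n k \<inter> J" j "x 1"] by auto
    qed
    have K0: "K \<subseteq> {..<p}" by (auto simp: K_def)
    have U1: "({..<n} - J) \<union> J = {..<n}" using J by auto
    have U2: "({..<n} - J) \<inter> J = {}" by auto
    show ?thesis
      apply (rule exI[of _ "{..<n} - J"])
      apply (rule exI[of _ J])
      apply (intro conjI I1 J(1) U1 U2)
      apply (rule exI[of _ K])
      using K0 K1 K2 K3 by simp
  qed
  show ?thesis
    apply (intro conjI iffI)
        apply (erule d12)
       apply (erule d21)
      apply (erule d23)
     apply (erule d32)
    apply (rule p3)
    done
qed

end
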